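(* Let $\mathbb{K}$ be a field containing a primitive $n$-th root of unity $\zeta_n$, let $g\ge1$, and let $(A_1,B_1,\dots,A_g,B_g)\in\operatorname{Sl}_n(\mathbb{K})^{2g}$ satisfy $[A_1,B_1]\cdots[A_g,B_g]=\zeta_n I$, where $[A,B]=ABA^{-1}B^{-1}$. If $Z\in\mathbb{K}^{n\times n}$ commutes with all the $A_i$ and $B_i$, then $Z$ is a scalar multiple of the identity. *)

theory Defs
  imports "HOL-Analysis.Analysis"
begin

definition primitive_root_of_unity :: "'a::field \<Rightarrow> nat \<Rightarrow> bool" where
  "primitive_root_of_unity z n \<longleftrightarrow> 0 < n \<and> z ^ n = 1 \<and> (\<forall>k. 0 < k \<and> k < n \<longrightarrow> z ^ k \<noteq> 1)"

definition SL :: "('a::field ^ 'n::finite ^ 'n) set" where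
  "SL = {M. det M = 1}"

definition mcomm :: "'a::field ^ 'n::finite ^ 'n \<Rightarrow> 'a ^ 'n ^ 'n \<Rightarrow> 'a ^ 'n ^ 'n" where
  "mcomm A B = A ** B ** matrix_inv A ** matrix_inv B"

text \<open>Ordered product [A_0,B_0] [A_1,B_1] ... [A_(g-1),B_(g-1)].\<close>
definition comm_prod :: "nat \<Rightarrow> (nat \<Rightarrow> 'a::field ^ 'n::finite ^ 'n) \<Rightarrow> (nat \<Rightarrow> 'a ^ 'n ^ 'n) \<Rightarrow> 'a ^ 'n ^ 'n" where
  "comm_prod g A B = foldr (\<lambda>i M. mcomm (A i) (B i) ** M) [0..<g] (mat 1)"

end

theory Submission imports Defs "HOL-Algebra.Algebraic_Closure_Type"
begin

definition cpm :: "'a::field^'n^'n \<Rightarrow> 'a poly^'n^'n" where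
  "cpm Z = (\<chi> i j. if i = j then [:Z$i$j, -1:] else [:Z$i$j:])"

lemma poly_cp: "poly (det (cpm Z)) x = det (Z - mat x)"
  unfolding det_def poly_sum
  by (auto simp: cpm_def mat_def poly_prod intro!: sum.cong prod.cong)

lemma coeff_cp: "Polynomial.coeff (det (cpm (Z::'a::field^'n^'n))) CARD('n) = (-1)^CARD('n)"
proof -
  let ?pp = "\<lambda>p. of_int (sign p) * (\<Prod>i\<in>UNIV. cpm Z $ i $ p i)"
  have "Polynomial.coeff (det (cpm Z)) CARD('n) = (\<Sum>p\<in>{p. p permutes (UNIV::'n set)}. Polynomial.coeff (?pp p) CARD('n))"
    unfolding det_def coeff_sum ..
  also have "\<dots> = (\<Sum>p\<in>{id}. Polynomial.coeff (?pp p) CARD('n))"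
  proof -
    have "\<forall>p\<in>{p. p permutes (UNIV::'n set)} - {id}. Polynomial.coeff (?pp p) CARD('n) = 0"
    proof
      fix p assume p: "p \<in> {p. p permutes (UNIV::'n set)} - {id}"
      then obtain k where k: "p k \<noteq> k" by fastforce
      have "Polynomial.degree (\<Prod>i\<in>UNIV. cpm Z $ i $ p i) \<le> (\<Sum>i\<in>UNIV. Polynomial.degree (cpm Z $ i $ p i))"
        using degree_prod_sum_le[of UNIV "\<lambda>i. cpm Z $ i $ p i"] by (simp add: o_def)
      also have "\<dots> < (\<Sum>i\<in>(UNIV::'n set). 1)"
        by (rule sum_strict_mono_ex1) (use k in \<open>auto simp: cpm_def intro!: exI[of _ k]\<close>)
      finally have d: "Polynomial.degree (\<Prod>i\<in>UNIV. cpm Z $ i $ p i) < CARD('n)" by simp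
      have "Polynomial.coeff (?pp p) CARD('n) = of_int (sign p) * Polynomial.coeff (\<Prod>i\<in>UNIV. cpm Z $ i $ p i) CARD('n)"
        by (simp add: of_int_poly)
      also have "\<dots> = 0" using d by (simp add: coeff_eq_0)
      finally show "Polynomial.coeff (?pp p) CARD('n) = 0" .
    qed
    moreover have "finite {p. p permutes (UNIV::'n set)}" by (simp add: finite_permutations)
    moreover have "{id} \<subseteq> {p. p permutes (UNIV::'n set)}" by (auto simp: permutes_id)
    ultimately show ?thesis by (metis (no_types, lifting) sum.mono_neutral_right)
  qed
  also have "\<dots> = Polynomial.coeff (\<Prod>i\<in>UNIV. [:Z$i$i, -1:]) CARD('n)"
    by (simp add: sign_id cpm_def)
  also have "\<dots> = (-1)^CARD('n)"
  proof -
    have "Polynomial.degree (\<Prod>i\<in>(UNIV::'n set). [:Z$i$i, -1:]) = CARD('n)"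
      by (subst degree_prod_eq_sum_degree) auto
    moreover have "Polynomial.lead_coeff (\<Prod>i\<in>(UNIV::'n set). [:Z$i$i, -1:]) = (-1)^CARD('n)"
      by (simp add: lead_coeff_prod)
    ultimately show ?thesis by simp
  qed
  finally show ?thesis .
qed

lemma eigenvalue_exists:
  fixes Z :: "'a::alg_closed_field^'n^'n"
  shows "\<exists>x. det (Z - mat x) = 0"
proof -
  have "Polynomial.coeff (det (cpm Z)) CARD('n) \<noteq> 0" by (simp add: coeff_cp)
  hence "CARD('n) \<le> Polynomial.degree (det (cpm Z))" by (rule le_degree)
  moreover have "CARD('n) > 0" by (rule finite_UNIV_card_ge_0) simp
  ultimately have "Polynomial.degree (det (cpm Z)) > 0" by linarith
  then obtain x where "poly (det (cpm Z)) x = 0" using alg_closed_imp_poly_has_root by blast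
  thus ?thesis by (auto simp: poly_cp)
qed


lemma minv:
  fixes A :: "'a::field^'n^'n"
  assumes "invertible A"
  shows "A ** matrix_inv A = mat 1" "matrix_inv A ** A = mat 1"
proof -
  have "\<exists>A'. A ** A' = mat 1 \<and> A' ** A = mat 1" using assms by (simp add: invertible_def)
  hence "A ** matrix_inv A = mat 1 \<and> matrix_inv A ** A = mat 1"
    unfolding matrix_inv_def by (rule someI_ex)
  thus "A ** matrix_inv A = mat 1" "matrix_inv A ** A = mat 1" by auto
qed

lemma minv_unique:
  fixes A :: "'a::field^'n^'n"
  assumes "A ** B = mat 1" "B ** A = mat 1"
  shows "matrix_inv A = B"
proof -
  have inv: "invertible A" using assms unfolding invertible_def by blast
  have "matrix_inv A = matrix_inv A ** (A ** B)" using assms by simp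
  also have "\<dots> = B" by (simp add: matrix_mul_assoc minv[OF inv])
  finally show ?thesis .
qed

lemma mat_comm: "mat c ** M = M ** (mat c :: 'a::comm_ring_1^'n^'n)"
  by (simp add: vec_eq_iff matrix_matrix_mult_def mat_def if_distrib if_distribR sum.delta sum.delta' mult.commute cong: if_cong)

lemma mat_sub_rdist: "(M - N) ** W = M ** W - N ** (W::'a::comm_ring_1^'n^'n)"
  by (simp add: vec_eq_iff matrix_matrix_mult_def sum_subtractf left_diff_distrib)

lemma mat_sub_ldist: "W ** (M - N) = W ** M - W ** (N::'a::comm_ring_1^'n^'n)"
  by (simp add: vec_eq_iff matrix_matrix_mult_def sum_subtractf right_diff_distrib)

lemma axis_col: "((M::'a::comm_ring_1^'n^'n) *v axis j 1) $ i = M $ i $ j"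
  by (simp add: matrix_vector_mult_def axis_def if_distrib if_distribR sum.delta' cong: if_cong)

lemma comm_inv:
  fixes Y A :: "'a::field^'n^'n"
  assumes "invertible A" "Y ** A = A ** Y"
  shows "Y ** matrix_inv A = matrix_inv A ** Y"
proof -
  have "Y ** matrix_inv A = matrix_inv A ** A ** Y ** matrix_inv A"
    by (simp add: minv[OF assms(1)])
  also have "\<dots> = matrix_inv A ** (A ** Y) ** matrix_inv A" by (simp add: matrix_mul_assoc)
  also have "\<dots> = matrix_inv A ** (Y ** A) ** matrix_inv A" using assms(2) by simp
  also have "\<dots> = matrix_inv A ** Y ** (A ** matrix_inv A)" by (simp add: matrix_mul_assoc)
  finally show ?thesis by (simp add: minv[OF assms(1)])
qed

lemma comm_mult:
  fixes Y A B :: "'a::field^'n^'n"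
  assumes "Y ** A = A ** Y" "Y ** B = B ** Y"
  shows "Y ** (A ** B) = (A ** B) ** Y"
  by (metis assms matrix_mul_assoc)

definition blk :: "'n set \<Rightarrow> 'a::comm_ring_1^'n^'n \<Rightarrow> 'a^'n^'n" where
  "blk S M = (\<chi> i j. if i \<in> S \<and> j \<in> S then M$i$j else (if i = j then 1 else 0))"

definition struct :: "'n set \<Rightarrow> 'a::comm_ring_1^'n^'n \<Rightarrow> bool" where
  "struct S M \<longleftrightarrow> (\<forall>i j. i \<notin> S \<longrightarrow> j \<in> S \<longrightarrow> M$i$j = 0)"

lemma struct_mult: "struct S M \<Longrightarrow> struct S N \<Longrightarrow> struct S (M ** N)"
  unfolding struct_def matrix_matrix_mult_def
  by (auto intro!: sum.neutral) (metis mult_not_zero)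

lemma blk_mult:
  fixes M N :: "'a::comm_ring_1^'n^'n"
  assumes "struct S N"
  shows "blk S (M ** N) = blk S M ** blk S N"
proof -
  have "(blk S (M ** N))$i$j = (blk S M ** blk S N)$i$j" for i j
  proof (cases "i \<in> S")
    case iS: True
    show ?thesis
    proof (cases "j \<in> S")
      case True
      have "(blk S M ** blk S N)$i$j = (\<Sum>l\<in>UNIV. M$i$l * N$l$j)"
        unfolding matrix_matrix_mult_def using assms iS True
        by (auto simp: blk_def struct_def intro!: sum.cong)
      thus ?thesis using iS True by (simp add: blk_def matrix_matrix_mult_def)
    next
      case False
      have "(blk S M ** blk S N)$i$j = 0"
        unfolding matrix_matrix_mult_def using iS False
        by (auto simp: blk_def intro!: sum.neutral)
      thus ?thesis using iS False by (auto simp: blk_def)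
    qed
  next
    case False
    have "(blk S M ** blk S N)$i$j = (\<Sum>l\<in>UNIV. (if i = l then (blk S N)$l$j else 0))"
      unfolding matrix_matrix_mult_def vec_lambda_beta using False
      by (intro sum.cong) (auto simp: blk_def)
    also have "\<dots> = (blk S N)$i$j" by (simp add: sum.delta)
    finally show ?thesis using False by (simp add: blk_def)
  qed
  thus ?thesis by (simp add: vec_eq_iff)
qed

lemma det_blk_mat: "det (blk S (mat c :: 'a::comm_ring_1^'n^'n)) = c ^ card S"
proof -
  have "det (blk S (mat c :: 'a^'n^'n)) = (\<Prod>i\<in>UNIV. if i \<in> S then c else 1)"
    by (subst det_diagonal) (auto simp: blk_def mat_def intro!: prod.cong)
  also have "\<dots> = c ^ card S"
    by (simp add: prod.If_cases Int_def)
  finally show ?thesis .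
qed


lemma core:
  fixes Y :: "'a::field^'n^'n" and \<zeta> :: 'a and A B :: "nat \<Rightarrow> 'a^'n^'n"
  assumes prim: "primitive_root_of_unity \<zeta> CARD('n)"
    and Y0: "Y \<noteq> 0" and Ysing: "det Y = 0"
    and inv: "\<forall>i<g. invertible (A i) \<and> invertible (B i)"
    and cp: "comm_prod g A B = mat \<zeta>"
    and comm: "\<forall>i<g. Y ** A i = A i ** Y \<and> Y ** B i = B i ** Y"
  shows False
proof -
  define E where "E = {v. Y *v v = 0}"
  have subE: "vec.subspace E"
  proof -
    have "Y *v (c *s x) = c *s (Y *v x)" for c x
      by (simp add: vec_eq_iff matrix_vector_mult_def sum_distrib_left mult_ac)
    thus ?thesis by (simp add: E_def vec.subspace_def matrix_vector_right_distrib)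
  qed
  obtain Be where Be: "Be \<subseteq> E" "vec.independent Be" "E \<subseteq> vec.span Be" "card Be = vec.dim E"
    using vec.basis_exists by blast
  have finBe: "finite Be" using Be(2) vec.finiteI_independent by blast
  have spanBe: "vec.span Be = E"
    using Be subE by (simp add: vec.span_subspace)
  define Bs where "Bs = vec.extend_basis Be"
  have Bs: "Be \<subseteq> Bs" "vec.independent Bs" "vec.span Bs = UNIV"
    unfolding Bs_def using vec.extend_basis_superset[OF Be(2)] vec.independent_extend_basis[OF Be(2)]
      vec.span_extend_basis[OF Be(2)] by auto
  have finBs: "finite Bs" using Bs(2) vec.finiteI_independent by blast
  have cardBs: "card Bs = CARD('n)"
    using vec.basis_card_eq_dim[of Bs UNIV] Bs vec_dim_card by auto
  obtain f where f: "bij_betw f (UNIV::'n set) Bs"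
    using finite_same_card_bij[of "UNIV::'n set" Bs] finBs cardBs by auto
  define S where "S = {j. f j \<in> Be}"
  have fS: "bij_betw f S Be"
    using f Bs(1) unfolding S_def bij_betw_def inj_on_def by auto
  have cardS: "card S = card Be" using bij_betw_same_card[OF fS] .
  have "\<not> invertible Y" using Ysing invertible_det_nz by blast
  hence "\<not> (\<exists>B. B ** Y = mat 1)" using invertible_left_inverse by blast
  then obtain x where x: "Y *v x = 0" "x \<noteq> 0"
    using matrix_left_invertible_ker by blast
  have "Be \<noteq> {}"
  proof
    assume "Be = {}"
    hence "E \<subseteq> {0}" using Be(3) by simp
    moreover have "x \<in> E" using x by (simp add: E_def)
    ultimately show False using x by auto
  qed
  hence S0: "card S > 0" using cardS finBe by (simp add: card_gt_0_iff)
  have S1: "card S < CARD('n)"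
  proof (rule ccontr)
    assume "\<not> card S < CARD('n)"
    moreover have "card Be \<le> card Bs" using Bs(1) finBs card_mono by blast
    ultimately have "vec.dim (UNIV::('a^'n) set) \<le> card Be" using cardS cardBs vec_dim_card[where 'a='a and 'n='n] by linarith
    hence "UNIV \<subseteq> vec.span Be" using vec.card_ge_dim_independent[of Be UNIV] Be(2) by auto
    hence "E = UNIV" using spanBe by auto
    hence "\<forall>v. Y *v v = 0 *v v" by (auto simp: E_def)
    hence "Y = 0" using matrix_eq by blast
    thus False using Y0 by simp
  qed
  define P :: "'a^'n^'n" where "P = (\<chi> i j. f j $ i)"
  have Pv: "P *v w = (\<Sum>j\<in>UNIV. w$j *s f j)" for w
    unfolding matrix_mult_sum by (simp add: P_def column_def)
  have Paxis: "P *v axis j 1 = f j" for j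
    by (simp add: vec_eq_iff P_def matrix_vector_mult_def axis_def if_distrib if_distribR sum.delta' cong: if_cong)
  have reind: "(\<Sum>b\<in>Bs. u b *s b) = (\<Sum>j\<in>UNIV. u (f j) *s f j)" for u
    using sum.reindex_bij_betw[OF f, of "\<lambda>b. u b *s b"] by simp
  have "surj ((*v) P)"
  proof -
    have "y \<in> range ((*v) P)" for y
    proof -
      have "y \<in> vec.span Bs" using Bs(3) by simp
      then obtain u where "y = (\<Sum>b\<in>Bs. u b *s b)" using vec.span_finite[OF finBs] by auto
      hence "y = P *v (\<chi> j. u (f j))" by (simp add: Pv reind)
      thus ?thesis by blast
    qed
    thus ?thesis by auto
  qed
  hence Pinv: "invertible P"
    using matrix_right_invertible_surjective invertible_right_inverse by blast
  define Pi where "Pi = matrix_inv P"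
  have PPi: "P ** Pi = mat 1" "Pi ** P = mat 1" using minv[OF Pinv] by (auto simp: Pi_def)
  have structX: "struct S (Pi ** W ** P)" if XY: "Y ** W = W ** Y" for W
  proof -
    have "(Pi ** W ** P) $ i $ j = 0" if i: "i \<notin> S" and j: "j \<in> S" for i j
    proof -
      have "f j \<in> E" using j Be(1) by (auto simp: S_def)
      hence "Y *v (W *v f j) = 0"
        by (simp add: E_def matrix_vector_mul_assoc XY) (metis matrix_vector_mul_assoc matrix_vector_mult_0_right)
      hence "W *v f j \<in> vec.span Be" using spanBe by (simp add: E_def)
      then obtain u where u: "W *v f j = (\<Sum>b\<in>Be. u b *s b)" using vec.span_finite[OF finBe] by auto
      define w where "w = (\<chi> l. if l \<in> S then u (f l) else 0)"
      have "P *v w = (\<Sum>l\<in>UNIV. (if l \<in> S then u (f l) *s f l else 0))"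
        unfolding Pv w_def by (intro sum.cong) auto
      also have "\<dots> = (\<Sum>l\<in>S. u (f l) *s f l)"
        by (simp add: sum.If_cases Int_def)
      also have "\<dots> = (\<Sum>b\<in>Be. u b *s b)"
        using sum.reindex_bij_betw[OF fS, of "\<lambda>b. u b *s b"] by simp
      finally have Pw: "P *v w = W *v f j" using u by simp
      have "(Pi ** W ** P) *v axis j 1 = Pi *v (W *v f j)"
        by (simp add: Paxis flip: matrix_vector_mul_assoc)
      also have "\<dots> = w" by (simp add: Pw[symmetric] matrix_vector_mul_assoc PPi)
      finally have "((Pi ** W ** P) *v axis j 1) $ i = 0" using i by (simp add: w_def)
      thus ?thesis by (simp add: axis_col)
    qed
    thus ?thesis by (auto simp: struct_def)
  qed
  define \<phi> where "\<phi> W = det (blk S (Pi ** W ** P))" for W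
  have phimult: "\<phi> (X1 ** X2) = \<phi> X1 * \<phi> X2" if "Y ** X2 = X2 ** Y" for X1 X2
  proof -
    have "Pi ** (X1 ** X2) ** P = (Pi ** X1 ** P) ** (Pi ** X2 ** P)"
      by (metis PPi(1) matrix_mul_assoc matrix_mul_rid)
    thus ?thesis unfolding \<phi>_def by (simp add: blk_mult[OF structX[OF that]] det_mul)
  qed
  have phimat: "\<phi> (mat c) = c ^ card S" for c
  proof -
    have "Pi ** mat c ** P = mat c"
      by (metis PPi(2) mat_comm matrix_mul_assoc matrix_mul_lid)
    thus ?thesis by (simp add: \<phi>_def det_blk_mat)
  qed
  have phiinv: "\<phi> W * \<phi> (matrix_inv W) = 1" if "invertible W" "Y ** W = W ** Y" for W
    using phimult[OF comm_inv[OF that], of W] phimat[of 1] minv(1)[OF that(1)] by simp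
  have key: "(\<forall>i\<in>set xs. i < g) \<Longrightarrow>
     Y ** foldr (\<lambda>i M. mcomm (A i) (B i) ** M) xs (mat 1) = foldr (\<lambda>i M. mcomm (A i) (B i) ** M) xs (mat 1) ** Y
     \<and> \<phi> (foldr (\<lambda>i M. mcomm (A i) (B i) ** M) xs (mat 1)) = 1" for xs
  proof (induction xs)
    case Nil
    show ?case using phimat[of 1] by simp
  next
    case (Cons a xs)
    hence a: "a < g" and IH: "Y ** foldr (\<lambda>i M. mcomm (A i) (B i) ** M) xs (mat 1) = foldr (\<lambda>i M. mcomm (A i) (B i) ** M) xs (mat 1) ** Y"
      "\<phi> (foldr (\<lambda>i M. mcomm (A i) (B i) ** M) xs (mat 1)) = 1" by auto
    have iA: "invertible (A a)" and iB: "invertible (B a)" using inv a by auto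
    have cA: "Y ** A a = A a ** Y" and cB: "Y ** B a = B a ** Y" using comm a by auto
    have cAi: "Y ** matrix_inv (A a) = matrix_inv (A a) ** Y" using comm_inv[OF iA cA] .
    have cBi: "Y ** matrix_inv (B a) = matrix_inv (B a) ** Y" using comm_inv[OF iB cB] .
    have cAB: "Y ** (A a ** B a) = (A a ** B a) ** Y" by (rule comm_mult[OF cA cB])
    have cABA: "Y ** (A a ** B a ** matrix_inv (A a)) = (A a ** B a ** matrix_inv (A a)) ** Y"
      by (rule comm_mult[OF cAB cAi])
    have cC: "Y ** mcomm (A a) (B a) = mcomm (A a) (B a) ** Y"
      unfolding mcomm_def by (rule comm_mult[OF cABA cBi])
    have phiC: "\<phi> (mcomm (A a) (B a)) = 1"
    proof -
      have "\<phi> (mcomm (A a) (B a)) = \<phi> (A a) * \<phi> (B a) * \<phi> (matrix_inv (A a)) * \<phi> (matrix_inv (B a))"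
        unfolding mcomm_def by (simp add: phimult cA cB cAi cBi cAB cABA)
      also have "\<dots> = (\<phi> (A a) * \<phi> (matrix_inv (A a))) * (\<phi> (B a) * \<phi> (matrix_inv (B a)))"
        by (simp add: ac_simps)
      also have "\<dots> = 1" using phiinv[OF iA cA] phiinv[OF iB cB] by simp
      finally show ?thesis .
    qed
    show ?case using IH cC phiC by (simp add: comm_mult phimult)
  qed
  have "\<phi> (comm_prod g A B) = 1" using key[of "[0..<g]"] by (simp add: comm_prod_def)
  hence "\<zeta> ^ card S = 1" using cp phimat by simp
  thus False using prim S0 S1 unfolding primitive_root_of_unity_def by blast
qed


definition mapm :: "'a::field^'n^'n \<Rightarrow> 'a alg_closure^'n^'n" where
  "mapm M = (\<chi> i j. to_ac (M$i$j))"

lemma mapm_mult: "mapm (M ** N) = mapm M ** mapm N"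
  by (simp add: vec_eq_iff mapm_def matrix_matrix_mult_def to_ac_sum)

lemma mapm_mat: "mapm (mat c) = mat (to_ac c)"
  by (simp add: vec_eq_iff mapm_def mat_def)

lemma mapm_det: "det (mapm M) = to_ac (det M)"
  unfolding det_def by (simp add: to_ac_sum to_ac_prod mapm_def)

lemma mapm_inj: "mapm M = mapm N \<Longrightarrow> M = N"
  by (simp add: vec_eq_iff mapm_def)

lemma mapm_minv:
  assumes "invertible M"
  shows "matrix_inv (mapm M) = mapm (matrix_inv M)"
  by (rule minv_unique) (simp_all add: minv[OF assms] flip: mapm_mult add: mapm_mat)

lemma mapm_foldr:
  assumes "\<forall>i\<in>set xs. invertible (A i) \<and> invertible (B i)"
  shows "mapm (foldr (\<lambda>i M. mcomm (A i) (B i) ** M) xs (mat 1))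
       = foldr (\<lambda>i M. mcomm (mapm (A i)) (mapm (B i)) ** M) xs (mat 1)"
  using assms
  by (induction xs) (auto simp: mapm_mat mapm_mult mcomm_def mapm_minv)

theorem proposition3p1:
  fixes \<zeta> :: "'a::field" and g :: nat
    and A B :: "nat \<Rightarrow> 'a ^ 'n::finite ^ 'n" and Z :: "'a ^ 'n ^ 'n"
  assumes "primitive_root_of_unity \<zeta> CARD('n)"
    and "g \<ge> 1"
    and "\<forall>i<g. A i \<in> SL \<and> B i \<in> SL"
    and "comm_prod g A B = mat \<zeta>"
    and "\<forall>i<g. Z ** A i = A i ** Z \<and> Z ** B i = B i ** Z"
  shows "\<exists>c. Z = mat c"
proof -
  have inv: "\<forall>i<g. invertible (A i) \<and> invertible (B i)"
    using assms(3) by (simp add: SL_def invertible_det_nz)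
  define A' where "A' i = mapm (A i)" for i
  define B' where "B' i = mapm (B i)" for i
  have inv': "\<forall>i<g. invertible (A' i) \<and> invertible (B' i)"
    using assms(3) by (simp add: SL_def invertible_det_nz A'_def B'_def mapm_det)
  have cp': "comm_prod g A' B' = mat (to_ac \<zeta>)"
  proof -
    have "mapm (comm_prod g A B) = comm_prod g A' B'"
      unfolding comm_prod_def A'_def B'_def by (rule mapm_foldr) (use inv in auto)
    thus ?thesis using assms(4) by (simp add: mapm_mat)
  qed
  have prim': "primitive_root_of_unity (to_ac \<zeta>) CARD('n)"
    using assms(1) unfolding primitive_root_of_unity_def
    by (metis to_ac_1 to_ac_eq_iff to_ac_power)
  obtain \<theta> where \<theta>: "det (mapm Z - mat \<theta>) = 0" using eigenvalue_exists by blast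
  have "mapm Z = mat \<theta>"
  proof (rule ccontr)
    assume ne: "mapm Z \<noteq> mat \<theta>"
    define Y where "Y = mapm Z - mat \<theta>"
    have c: "\<forall>i<g. Y ** A' i = A' i ** Y \<and> Y ** B' i = B' i ** Y"
      using assms(5)
      by (simp add: Y_def A'_def B'_def mat_sub_rdist mat_sub_ldist mat_comm flip: mapm_mult)
    have Y0: "Y \<noteq> 0" using ne by (simp add: Y_def)
    have dY: "det Y = 0" using \<theta> by (simp add: Y_def)
    show False by (rule core[OF prim' Y0 dY inv' cp' c])
  qed
  hence "\<forall>i j. to_ac (Z$i$j) = (if i = j then \<theta> else 0)"
    by (simp add: vec_eq_iff mapm_def mat_def)
  hence "Z = mat (of_ac \<theta>)"
    by (auto simp: vec_eq_iff mat_def intro: of_ac_eqI[symmetric]) (metis to_ac_eq_0_iff)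
  thus ?thesis by blast
qed

end
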